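(* Let $P$ and $Q$ be ultra-parallel planes in $\mathbb{H}^4$. Then $H_PH_Q$ is a hyperbolic isometry.
   Context: A plane is a $2$-dimensional totally geodesic subspace of $\mathbb{H}^4$. Two planes are ultra-parallel if their closures in $\mathbb{H}^4\cup\partial\mathbb{H}^4$ are disjoint. For a plane $P$, the half-turn $H_P$ is the composition of reflections in two orthogonal hyperplanes intersecting in $P$; it is the orientation preserving involution with fixed set $P$. *)

theory Defs
  imports "HOL-Analysis.Analysis"
begin

text \<open>Hyperboloid model of H^4 in Minkowski space R^{1,4}, represented as
  real \<times> real^4 (time coordinate, spatial part).\<close>

type_synonym mink = "real \<times> (real^4)"

definition mink_form :: "mink \<Rightarrow> mink \<Rightarrow> real" where
  "mink_form x y = - fst x * fst y + snd x \<bullet> snd y"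

definition H4 :: "mink set" where
  "H4 = {x. mink_form x x = -1 \<and> fst x > 0}"

text \<open>A plane (2-dim totally geodesic subspace) is a nonempty intersection of H4
  with a 3-dimensional linear subspace of R^{1,4}.\<close>
definition is_plane :: "mink set \<Rightarrow> bool" where
  "is_plane P \<longleftrightarrow> (\<exists>V. subspace V \<and> dim V = 3 \<and> P = H4 \<inter> V \<and> P \<noteq> {})"

text \<open>Reflection in the hyperplane H4 \<inter> n^perp, n a unit spacelike vector.\<close>
definition mink_refl :: "mink \<Rightarrow> mink \<Rightarrow> mink" where
  "mink_refl n x = x - (2 * mink_form x n) *\<^sub>R n"

definition is_half_turn :: "mink set \<Rightarrow> (mink \<Rightarrow> mink) \<Rightarrow> bool" where
  "is_half_turn P h \<longleftrightarrow> (\<exists>n1 n2. mink_form n1 n1 = 1 \<and> mink_form n2 n2 = 1 \<and>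
      mink_form n1 n2 = 0 \<and>
      P = {x \<in> H4. mink_form x n1 = 0 \<and> mink_form x n2 = 0} \<and>
      h = mink_refl n1 \<circ> mink_refl n2)"

text \<open>Map to the Poincare ball model (open unit ball of R^4); the closure of a set in
  H4 \<union> \<partial>H4 is its closure in the closed unit ball.\<close>
definition to_ball :: "mink \<Rightarrow> real^4" where
  "to_ball x = (1 / (1 + fst x)) *\<^sub>R snd x"

definition ultra_parallel :: "mink set \<Rightarrow> mink set \<Rightarrow> bool" where
  "ultra_parallel P Q \<longleftrightarrow> closure (to_ball ` P) \<inter> closure (to_ball ` Q) = {}"

definition is_H4_isometry :: "(mink \<Rightarrow> mink) \<Rightarrow> bool" where
  "is_H4_isometry g \<longleftrightarrow> linear g \<and> (\<forall>x y. mink_form (g x) (g y) = mink_form x y) \<and> g ` H4 = H4"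

text \<open>Boundary point \<xi> (unit vector in R^4, i.e. the null ray through (1,\<xi>)) fixed by g.\<close>
definition fixes_boundary_point :: "(mink \<Rightarrow> mink) \<Rightarrow> real^4 \<Rightarrow> bool" where
  "fixes_boundary_point g \<xi> \<longleftrightarrow> norm \<xi> = 1 \<and> (\<exists>c>0. g (1, \<xi>) = c *\<^sub>R (1, \<xi>))"

definition hyperbolic_isometry :: "(mink \<Rightarrow> mink) \<Rightarrow> bool" where
  "hyperbolic_isometry g \<longleftrightarrow> is_H4_isometry g \<and> (\<forall>x\<in>H4. g x \<noteq> x) \<and>
     card {\<xi>. fixes_boundary_point g \<xi>} = 2"

end

theory Submission
  imports Defs "HOL-Real_Asymp.Real_Asymp"
begin

lemma mf_sym: "mink_form x y = mink_form y x"
  by (simp add: mink_form_def inner_commute mult.commute)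
lemma mf_add1[simp]: "mink_form (x + y) z = mink_form x z + mink_form y z"
  by (simp add: mink_form_def inner_add_left algebra_simps)
lemma mf_add2[simp]: "mink_form z (x + y) = mink_form z x + mink_form z y"
  by (simp add: mink_form_def inner_add_right algebra_simps)
lemma mf_diff1[simp]: "mink_form (x - y) z = mink_form x z - mink_form y z"
  by (simp add: mink_form_def inner_diff_left algebra_simps)
lemma mf_diff2[simp]: "mink_form z (x - y) = mink_form z x - mink_form z y"
  by (simp add: mink_form_def inner_diff_right algebra_simps)
lemma mf_scale1[simp]: "mink_form (c *\<^sub>R x) z = c * mink_form x z"
  by (simp add: mink_form_def algebra_simps)
lemma mf_scale2[simp]: "mink_form z (c *\<^sub>R x) = c * mink_form z x"
  by (simp add: mink_form_def algebra_simps)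
lemma mf_neg1[simp]: "mink_form (- x) z = - mink_form x z"
  by (simp add: mink_form_def algebra_simps)
lemma mf_neg2[simp]: "mink_form z (- x) = - mink_form z x"
  by (simp add: mink_form_def algebra_simps)
lemma mf_zero[simp]: "mink_form 0 z = 0" "mink_form z 0 = 0"
  by (simp_all add: mink_form_def)

lemma mf_inner: "mink_form x y = (- fst x, snd x) \<bullet> y"
  by (simp add: mink_form_def inner_prod_def)

lemma linear_refl: "linear (mink_refl n)"
  unfolding mink_refl_def
  by (rule linearI) (simp_all add: algebra_simps scaleR_add_left)

lemma refl_form: "mink_form n n = 1 \<Longrightarrow> mink_form (mink_refl n x) (mink_refl n y) = mink_form x y"
  unfolding mink_refl_def by (simp add: mf_sym[of n x] mf_sym[of n y] algebra_simps)
lemma refl_invol: "mink_form n n = 1 \<Longrightarrow> mink_refl n (mink_refl n x) = x"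
  unfolding mink_refl_def by (simp add: algebra_simps)
lemma H4_sheet:
  assumes x: "x \<in> H4" and y: "mink_form y y = -1" and xy: "mink_form x y < 0"
  shows "fst y > 0"
proof (rule ccontr)
  assume "\<not> fst y > 0"
  hence y0: "fst y \<le> 0" by simp
  have x0: "fst x > 0" and xx: "fst x * fst x = 1 + snd x \<bullet> snd x"
    using x by (auto simp: H4_def mink_form_def)
  have yy: "fst y * fst y = 1 + snd y \<bullet> snd y" using y by (simp add: mink_form_def)
  have cs: "- (snd x \<bullet> snd y) \<le> norm (snd x) * norm (snd y)"
    using norm_cauchy_schwarz[of "- snd x" "snd y"] by simp
  have nx: "norm (snd x) ^ 2 = snd x \<bullet> snd x" by (simp add: power2_norm_eq_inner)
  have ny: "norm (snd y) ^ 2 = snd y \<bullet> snd y" by (simp add: power2_norm_eq_inner)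
  have "norm (snd x) ^ 2 < fst x ^ 2" using xx nx by (simp add: power2_eq_square)
  hence a: "norm (snd x) < fst x" using x0 power_less_imp_less_base[of "norm (snd x)" 2 "fst x"] by linarith
  have "norm (snd y) ^ 2 < (- fst y) ^ 2" using yy ny by (simp add: power2_eq_square)
  hence b: "norm (snd y) < - fst y" using y0 power_less_imp_less_base[of "norm (snd y)" 2 "- fst y"] by linarith
  have "norm (snd x) * norm (snd y) < fst x * (- fst y)"
    using a b x0 by (intro mult_strict_mono) simp_all
  hence "mink_form x y > 0" using cs unfolding mink_form_def by (simp add: algebra_simps)
  thus False using xy by simp
qed

lemma refl_H4: assumes n: "mink_form n n = 1" and x: "x \<in> H4" shows "mink_refl n x \<in> H4"
proof -
  have xx: "mink_form x x = -1" using x by (simp add: H4_def)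
  have f: "mink_form (mink_refl n x) (mink_refl n x) = -1" using refl_form[OF n] xx by simp
  have "mink_form x (mink_refl n x) = -1 - 2 * (mink_form x n)^2"
    unfolding mink_refl_def using xx by (simp add: power2_eq_square)
  also have "\<dots> < 0" using zero_le_power2[of "mink_form x n"] by linarith
  finally show ?thesis using H4_sheet[OF x f] f by (simp add: H4_def)
qed

lemma refl_image: assumes n: "mink_form n n = 1" shows "mink_refl n ` H4 = H4"
proof
  show "mink_refl n ` H4 \<subseteq> H4" using refl_H4[OF n] by auto
  show "H4 \<subseteq> mink_refl n ` H4"
  proof
    fix x assume "x \<in> H4"
    hence "mink_refl n x \<in> H4" by (rule refl_H4[OF n])
    thus "x \<in> mink_refl n ` H4" using refl_invol[OF n, of x] by (metis image_eqI)
  qed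
qed

lemma half_turn_formula:
  assumes "mink_form n1 n1 = 1" "mink_form n2 n2 = 1" "mink_form n1 n2 = 0"
  shows "(mink_refl n1 \<circ> mink_refl n2) x = x - (2 * mink_form x n1) *\<^sub>R n1 - (2 * mink_form x n2) *\<^sub>R n2"
  using assms unfolding mink_refl_def by (simp add: mf_sym[of n2 n1] algebra_simps)

lemma iso_comp: assumes "is_H4_isometry f" "is_H4_isometry g" shows "is_H4_isometry (f \<circ> g)"
proof -
  have "(f \<circ> g) ` H4 = H4" using assms unfolding is_H4_isometry_def by (metis image_comp)
  moreover have "\<forall>x y. mink_form ((f \<circ> g) x) ((f \<circ> g) y) = mink_form x y"
    using assms unfolding is_H4_isometry_def comp_apply by metis
  moreover have "linear (f \<circ> g)" using assms unfolding is_H4_isometry_def by (metis linear_compose)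
  ultimately show ?thesis unfolding is_H4_isometry_def by blast
qed

lemma iso_refl: "mink_form n n = 1 \<Longrightarrow> is_H4_isometry (mink_refl n)"
  unfolding is_H4_isometry_def using linear_refl refl_form refl_image by blast

lemma lim_aux:
  fixes c p0 M :: real
  assumes "c > 0" "p0 > 0" "M \<ge> 0"
  shows "(\<lambda>k::nat. (M + sqrt (1 + 2 * c * real k) + p0) / (sqrt (1 + 2 * c * real k) + p0 + real k)) \<longlonglongrightarrow> 0"
  using assms by real_asymp

lemma H4_norm_lt: "x \<in> H4 \<Longrightarrow> norm (snd x) < fst x"
proof -
  assume x: "x \<in> H4"
  have x0: "fst x > 0" and xx: "fst x * fst x = 1 + snd x \<bullet> snd x"
    using x by (auto simp: H4_def mink_form_def)
  have nx: "norm (snd x) ^ 2 = snd x \<bullet> snd x" by (simp add: power2_norm_eq_inner)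
  have "norm (snd x) ^ 2 < fst x ^ 2" using xx nx by (simp add: power2_eq_square)
  thus "norm (snd x) < fst x" using x0 power_less_imp_less_base[of "norm (snd x)" 2 "fst x"] by linarith
qed

lemma boundary_closure:
  assumes p: "p \<in> H4" "mink_form p n1 = 0" "mink_form p n2 = 0"
    and xi: "norm \<xi> = 1" "mink_form (1, \<xi>) n1 = 0" "mink_form (1, \<xi>) n2 = 0"
  shows "\<xi> \<in> closure (to_ball ` {x \<in> H4. mink_form x n1 = 0 \<and> mink_form x n2 = 0})"
proof -
  define u :: mink where "u = (1, \<xi>)"
  define c where "c = - mink_form p u"
  have pp: "mink_form p p = -1" using p by (simp add: H4_def)
  have uu: "mink_form u u = 0" using xi by (simp add: u_def mink_form_def power2_norm_eq_inner[symmetric])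
  have "snd p \<bullet> \<xi> \<le> norm (snd p) * norm \<xi>" by (rule norm_cauchy_schwarz)
  hence c0: "c > 0" using H4_norm_lt[OF p(1)] xi(1) by (simp add: c_def u_def mink_form_def)
  have p0: "fst p > 0" using p by (simp add: H4_def)
  define s where "s = (\<lambda>k::nat. sqrt (1 + 2 * c * real k))"
  have ck: "0 < 1 + 2 * c * real k" for k using c0 by (simp add: add_pos_nonneg)
  have s0: "s k > 0" for k using ck[of k] by (simp add: s_def)
  have ss: "s k * s k = 1 + 2 * c * real k" for k using ck[of k] by (simp add: s_def)
  define f where "f = (\<lambda>k::nat. (1 / s k) *\<^sub>R (p + real k *\<^sub>R u))"
  have fP: "f k \<in> {x \<in> H4. mink_form x n1 = 0 \<and> mink_form x n2 = 0}" for k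
  proof -
    have "mink_form (f k) (f k) = (1 / (s k * s k)) * (mink_form p p + 2 * real k * mink_form p u + real k * real k * mink_form u u)"
      by (simp add: f_def mf_sym[of u p] algebra_simps)
    also have "\<dots> = -1" using pp uu ss[of k] s0[of k] by (simp add: c_def field_simps)
    finally have 1: "mink_form (f k) (f k) = -1" .
    have "fst (f k) = (fst p + real k) / s k" by (simp add: f_def u_def)
    hence 2: "fst (f k) > 0" using p0 s0[of k] by simp
    have 3: "mink_form (f k) n1 = 0" "mink_form (f k) n2 = 0"
      using p xi by (simp_all add: f_def u_def[symmetric])
    show ?thesis using 1 2 3 by (simp add: H4_def)
  qed
  define D where "D = (\<lambda>k. s k + fst p + real k)"
  have D0: "D k > 0" for k using s0[of k] p0 by (simp add: D_def)
  have tb: "to_ball (f k) - \<xi> = (1 / D k) *\<^sub>R (snd p - (s k + fst p) *\<^sub>R \<xi>)" for k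
  proof -
    have sc: "1 / (1 + (fst p + real k) / s k) * (1 / s k) = 1 / D k"
      using s0[of k] D0[of k] by (simp add: D_def field_simps)
    have "to_ball (f k) = (1 / (1 + (fst p + real k) / s k)) *\<^sub>R ((1 / s k) *\<^sub>R (snd p + real k *\<^sub>R \<xi>))"
      by (simp add: to_ball_def f_def u_def)
    also have "\<dots> = (1 / D k) *\<^sub>R (snd p + real k *\<^sub>R \<xi>)"
      by (simp only: scaleR_scaleR sc)
    finally have e: "to_ball (f k) = (1 / D k) *\<^sub>R (snd p + real k *\<^sub>R \<xi>)" .
    have dk: "(1 / D k) *\<^sub>R (D k *\<^sub>R \<xi>) = \<xi>" using D0[of k] by simp
    have "snd p - (s k + fst p) *\<^sub>R \<xi> = (snd p + real k *\<^sub>R \<xi>) - D k *\<^sub>R \<xi>"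
      by (simp add: D_def algebra_simps)
    hence "(1 / D k) *\<^sub>R (snd p - (s k + fst p) *\<^sub>R \<xi>) = (1 / D k) *\<^sub>R (snd p + real k *\<^sub>R \<xi>) - \<xi>"
      using dk by (simp only: scaleR_diff_right)
    thus ?thesis using e by simp
  qed
  have bound: "norm (to_ball (f k) - \<xi>) \<le> (norm (snd p) + s k + fst p) / D k" for k
  proof -
    have "norm (snd p - (s k + fst p) *\<^sub>R \<xi>) \<le> norm (snd p) + norm ((s k + fst p) *\<^sub>R \<xi>)"
      by (rule norm_triangle_ineq4)
    also have "\<dots> = norm (snd p) + s k + fst p" using xi(1) s0[of k] p0 by simp
    finally show ?thesis using D0[of k] by (simp add: tb divide_simps)
  qed
  have "(\<lambda>k. (norm (snd p) + s k + fst p) / D k) \<longlonglongrightarrow> 0"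
    using lim_aux[OF c0 p0 norm_ge_zero[of "snd p"]] by (simp add: s_def D_def add.assoc)
  hence "(\<lambda>k. to_ball (f k) - \<xi>) \<longlonglongrightarrow> 0"
    by (rule Lim_null_comparison[rotated]) (simp add: bound)
  hence "(\<lambda>k. to_ball (f k)) \<longlonglongrightarrow> \<xi>" by (simp add: LIM_zero_iff)
  thus ?thesis unfolding closure_sequential using fP
    by (intro exI[of _ "\<lambda>k. to_ball (f k)"]) blast
qed

lemma fst_nonzero: "mink_form s s < 0 \<Longrightarrow> fst s \<noteq> 0"
  by (auto simp: mink_form_def) (metis inner_ge_zero not_le)

lemma null_fst_nonzero: "mink_form s s = 0 \<Longrightarrow> s \<noteq> 0 \<Longrightarrow> fst s \<noteq> 0"
  by (cases s) (auto simp: mink_form_def zero_prod_def)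

lemma UP_causal:
  assumes P: "P = {x \<in> H4. mink_form x n1 = 0 \<and> mink_form x n2 = 0}"
    and Q: "Q = {x \<in> H4. mink_form x m1 = 0 \<and> mink_form x m2 = 0}"
    and p: "p \<in> P" and q: "q \<in> Q" and up: "ultra_parallel P Q"
    and s: "mink_form s n1 = 0" "mink_form s n2 = 0" "mink_form s m1 = 0" "mink_form s m2 = 0"
    and ss: "mink_form s s \<le> 0"
  shows "s = 0"
proof (rule ccontr)
  assume s0: "s \<noteq> 0"
  have disj: "closure (to_ball ` P) \<inter> closure (to_ball ` Q) = {}" using up by (simp add: ultra_parallel_def)
  show False
  proof (cases "mink_form s s < 0")
    case True
    define t where "t = sqrt (- mink_form s s)"
    have t0: "t > 0" using True by (simp add: t_def)
    have tt: "t * t = - mink_form s s" using True by (simp add: t_def)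
    define x where "x = (sgn (fst s) / t) *\<^sub>R s"
    have f0: "fst s \<noteq> 0" using fst_nonzero[OF True] .
    have sg: "sgn (fst s) * sgn (fst s) = 1" using f0 by (simp add: sgn_if)
    have "mink_form x x = (sgn (fst s) * sgn (fst s)) / (t * t) * mink_form s s"
      by (simp add: x_def)
    also have "\<dots> = -1" using sg tt t0 True by (simp add: field_simps)
    finally have xx: "mink_form x x = -1" .
    have "fst x = \<bar>fst s\<bar> / t" by (simp add: x_def sgn_if)
    hence "fst x > 0" using f0 t0 by simp
    hence "x \<in> P" "x \<in> Q" using xx s by (simp_all add: P Q H4_def x_def)
    hence "to_ball x \<in> closure (to_ball ` P) \<inter> closure (to_ball ` Q)"
      using closure_subset[of "to_ball ` P"] closure_subset[of "to_ball ` Q"] by (simp add: subset_iff)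
    thus False using disj by (simp add: disjoint_iff)
  next
    case False
    hence z: "mink_form s s = 0" using ss by simp
    have f0: "fst s \<noteq> 0" using null_fst_nonzero[OF z s0] .
    define \<xi> where "\<xi> = (1 / fst s) *\<^sub>R snd s"
    have u: "(1, \<xi>) = (1 / fst s) *\<^sub>R s" using f0 by (cases s) (simp add: \<xi>_def)
    have "\<xi> \<bullet> \<xi> = (snd s \<bullet> snd s) / (fst s * fst s)" by (simp add: \<xi>_def)
    also have "snd s \<bullet> snd s = fst s * fst s" using z by (simp add: mink_form_def)
    finally have "\<xi> \<bullet> \<xi> = 1" using f0 by simp
    hence n: "norm \<xi> = 1" by (simp add: norm_eq_sqrt_inner)
    have o: "mink_form (1, \<xi>) n1 = 0" "mink_form (1, \<xi>) n2 = 0"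
        "mink_form (1, \<xi>) m1 = 0" "mink_form (1, \<xi>) m2 = 0"
      unfolding u using s by simp_all
    have "\<xi> \<in> closure (to_ball ` P)" unfolding P
      using p n o unfolding P by (intro boundary_closure[of p n1 n2 \<xi>]) simp_all
    moreover have "\<xi> \<in> closure (to_ball ` Q)" unfolding Q
      using q n o unfolding Q by (intro boundary_closure[of q m1 m2 \<xi>]) simp_all
    ultimately show False using disj by (simp add: disjoint_iff)
  qed
qed

definition Jf :: "mink \<Rightarrow> mink" where "Jf x = (- fst x, snd x)"

lemma Jf_linear: "linear Jf"
  by (rule linearI) (simp_all add: Jf_def)

lemma Jf_inj: "inj Jf"
  by (rule injI) (simp add: Jf_def prod_eq_iff)

lemma mf_J: "mink_form x y = Jf x \<bullet> y"
  by (simp add: Jf_def mf_inner)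

lemma psd_complement:
  fixes u1 u2 u3 u4 :: mink
  assumes psd: "\<forall>x\<in>span {u1,u2,u3,u4}. mink_form x x \<ge> 0"
  shows "\<exists>s. s \<noteq> 0 \<and> mink_form s u1 = 0 \<and> mink_form s u2 = 0 \<and> mink_form s u3 = 0
     \<and> mink_form s u4 = 0 \<and> mink_form s s \<le> 0"
proof (rule ccontr)
  assume H: "\<not> ?thesis"
  define C where "C = span {u1,u2,u3,u4}"
  define C' where "C' = Jf ` C"
  define N where "N = {y. \<forall>x\<in>C'. orthogonal x y}"
  have sC: "subspace C" by (simp add: C_def)
  have "C' = span (Jf ` {u1,u2,u3,u4})" unfolding C'_def C_def by (metis span_linear_image[OF Jf_linear])
  hence sC': "subspace C'" by simp
  have dimN: "dim {y \<in> UNIV. \<forall>x\<in>C'. orthogonal x y} + dim C' = dim (UNIV :: mink set)"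
    by (rule dim_subspace_orthogonal_to_vectors[OF sC' subspace_UNIV]) simp
  have "dim C' = dim C" unfolding C'_def
    using Jf_linear Jf_inj by (intro dim_image_eq) (auto intro: inj_on_subset)
  hence dims: "dim N + dim C = 5" using dimN by (simp add: N_def dim_UNIV)
  have Nperp: "mink_form x s = 0" if "s \<in> N" "x \<in> C" for s x
  proof -
    have "Jf x \<in> C'" using that by (simp add: C'_def)
    hence "orthogonal (Jf x) s" using that by (simp add: N_def)
    thus ?thesis by (simp add: orthogonal_def mf_J)
  qed
  have uC: "u1 \<in> C" "u2 \<in> C" "u3 \<in> C" "u4 \<in> C" by (simp_all add: C_def span_base)
  have Nu: "mink_form s u1 = 0 \<and> mink_form s u2 = 0 \<and> mink_form s u3 = 0 \<and> mink_form s u4 = 0"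
    if "s \<in> N" for s
    using Nperp[OF that uC(1)] Nperp[OF that uC(2)] Nperp[OF that uC(3)] Nperp[OF that uC(4)]
    by (simp add: mf_sym[of _ s])
  have pos: "mink_form s s \<ge> 0" if "s \<in> N" for s
  proof -
    from Nu[OF that] have "s = 0 \<or> mink_form s s > 0" using H by (metis not_le)
    thus ?thesis by auto
  qed
  have sN: "subspace N" unfolding N_def
    by (rule subspace_orthogonal_to_vectors)
  have int: "N \<inter> C = {0}"
  proof
    show "N \<inter> C \<subseteq> {0}"
    proof
      fix s assume s: "s \<in> N \<inter> C"
      hence z: "mink_form s s = 0" using Nperp by blast
      show "s \<in> {0}"
      proof (rule ccontr)
        assume "s \<notin> {0}"
        hence "s \<noteq> 0" by simp
        moreover have "s \<in> C" using s by simp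
        hence "mink_form s u1 = 0 \<and> mink_form s u2 = 0 \<and> mink_form s u3 = 0 \<and> mink_form s u4 = 0"
          using Nu s by simp
        ultimately show False using H z by (metis order_refl)
      qed
    qed
    show "{0} \<subseteq> N \<inter> C" using sN sC by (simp add: subspace_0)
  qed
  have "dim {x + y |x y. x \<in> N \<and> y \<in> C} + dim (N \<inter> C) = dim N + dim C"
    by (rule dim_sums_Int[OF sN sC])
  hence d5: "dim {x + y |x y. x \<in> N \<and> y \<in> C} = DIM(mink)" using int dims by simp
  have sS: "subspace {x + y |x y. x \<in> N \<and> y \<in> C}" by (rule subspace_sums[OF sN sC])
  have "span {x + y |x y. x \<in> N \<and> y \<in> C} = UNIV" using d5 by (simp only: dim_eq_full)
  moreover have "span {x + y |x y. x \<in> N \<and> y \<in> C} = {x + y |x y. x \<in> N \<and> y \<in> C}"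
    using sS by (simp only: span_eq_iff)
  ultimately have "((1::real), (0::real^4)) \<in> {x + y |x y. x \<in> N \<and> y \<in> C}" by (metis UNIV_I)
  then obtain s c where sc: "(1, 0) = s + c" "s \<in> N" "c \<in> C" by (smt (verit) mem_Collect_eq)
  have "mink_form ((1::real), (0::real^4)) (1, 0) = -1" by (simp add: mink_form_def)
  hence "-1 = mink_form s s + 2 * mink_form c s + mink_form c c"
    using sc(1) by (simp add: mf_sym[of s c])
  moreover have "mink_form c s = 0" using Nperp sc by blast
  moreover have "mink_form s s \<ge> 0" using pos sc by blast
  moreover have "mink_form c c \<ge> 0" using psd sc unfolding C_def by blast
  ultimately show False by linarith
qed

lemma span4_rep:
  assumes "v \<in> span {a, b, c, d}"
  shows "\<exists>x1 x2 x3 x4. v = x1 *\<^sub>R a + x2 *\<^sub>R b + x3 *\<^sub>R c + x4 *\<^sub>R d"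
proof -
  from assms obtain k1 where 1: "v - k1 *\<^sub>R a \<in> span {b, c, d}" by (auto simp: span_insert)
  from 1 obtain k2 where 2: "v - k1 *\<^sub>R a - k2 *\<^sub>R b \<in> span {c, d}" by (auto simp: span_insert)
  from 2 obtain k3 where 3: "v - k1 *\<^sub>R a - k2 *\<^sub>R b - k3 *\<^sub>R c \<in> span {d}" by (auto simp: span_insert)
  from 3 obtain k4 where 4: "v - k1 *\<^sub>R a - k2 *\<^sub>R b - k3 *\<^sub>R c - k4 *\<^sub>R d \<in> span {}" by (auto simp: span_insert)
  hence "v = k1 *\<^sub>R a + k2 *\<^sub>R b + k3 *\<^sub>R c + k4 *\<^sub>R d" by (simp add: algebra_simps)
  thus ?thesis by blast
qed

lemma unit_inner_lt:
  fixes \<xi> \<eta> :: "real^4"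
  assumes "norm \<xi> = 1" "norm \<eta> = 1" "\<xi> \<noteq> \<eta>"
  shows "\<xi> \<bullet> \<eta> < 1"
proof -
  have "0 < norm (\<xi> - \<eta>) ^ 2" using assms(3) by simp
  also have "norm (\<xi> - \<eta>) ^ 2 = \<xi> \<bullet> \<xi> - 2 * (\<xi> \<bullet> \<eta>) + \<eta> \<bullet> \<eta>"
    by (simp add: power2_norm_eq_inner inner_diff_left inner_diff_right inner_commute)
  finally have "0 < \<xi> \<bullet> \<xi> - 2 * (\<xi> \<bullet> \<eta>) + \<eta> \<bullet> \<eta>" .
  moreover have "\<xi> \<bullet> \<xi> = 1" "\<eta> \<bullet> \<eta> = 1" using assms(1,2) by (simp_all add: power2_norm_eq_inner[symmetric])
  ultimately show ?thesis by simp
qed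

lemma fixes_pair:
  assumes g: "\<forall>x y. mink_form (g x) (g y) = mink_form x y"
    and "fixes_boundary_point g \<xi>" "fixes_boundary_point g \<eta>" "\<xi> \<noteq> \<eta>"
    and c: "g (1, \<xi>) = c *\<^sub>R (1, \<xi>)" and d: "g (1, \<eta>) = d *\<^sub>R (1, \<eta>)"
  shows "c * d = 1"
proof -
  have n: "norm \<xi> = 1" "norm \<eta> = 1" using assms(2,3) by (simp_all add: fixes_boundary_point_def)
  have "mink_form (1, \<xi>) (1, \<eta>) = -1 + \<xi> \<bullet> \<eta>" by (simp add: mink_form_def)
  hence ne: "mink_form (1, \<xi>) (1, \<eta>) \<noteq> 0" using unit_inner_lt[OF n assms(4)] by simp
  have "c * d * mink_form (1, \<xi>) (1, \<eta>) = mink_form (1, \<xi>) (1, \<eta>)"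
    using g[rule_format, of "(1, \<xi>)" "(1, \<eta>)"] unfolding c d by (simp only: mf_scale1 mf_scale2 mult.assoc mult.left_commute)
  thus ?thesis using ne by simp
qed

lemma boundary_from_null:
  assumes lin: "linear g" and v: "v \<noteq> 0" "mink_form v v = 0" and gv: "g v = l *\<^sub>R v" and l: "l > 0"
  shows "fixes_boundary_point g ((1 / fst v) *\<^sub>R snd v) \<and> g (1, (1 / fst v) *\<^sub>R snd v) = l *\<^sub>R (1, (1 / fst v) *\<^sub>R snd v)"
proof -
  have f0: "fst v \<noteq> 0" using null_fst_nonzero[OF v(2) v(1)] .
  define \<xi> where "\<xi> = (1 / fst v) *\<^sub>R snd v"
  have u: "(1, \<xi>) = (1 / fst v) *\<^sub>R v" using f0 by (cases v) (simp add: \<xi>_def)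
  have "\<xi> \<bullet> \<xi> = (snd v \<bullet> snd v) / (fst v * fst v)" by (simp add: \<xi>_def)
  also have "snd v \<bullet> snd v = fst v * fst v" using v(2) by (simp add: mink_form_def)
  finally have "\<xi> \<bullet> \<xi> = 1" using f0 by simp
  hence n: "norm \<xi> = 1" by (simp add: norm_eq_sqrt_inner)
  have "g (1, \<xi>) = l *\<^sub>R (1, \<xi>)" unfolding u using gv by (simp add: linear_cmul[OF lin])
  thus ?thesis using n l unfolding \<xi>_def[symmetric] fixes_boundary_point_def by blast
qed

lemma quad_bound:
  fixes A B C x y :: real
  assumes "A \<ge> 0" "C \<ge> 0" "A * C = B * B"
  shows "A * x * x - 2 * B * x * y + C * y * y \<ge> 0"
proof (cases "A = 0")
  case True
  hence "B = 0" using assms by simp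
  thus ?thesis using True assms by (simp add: mult.assoc)
next
  case False
  hence A: "A > 0" using assms by simp
  have "A * (A * x * x - 2 * B * x * y + C * y * y) = (A * x - B * y)^2"
    using assms(3) by (simp add: power2_eq_square algebra_simps)
  hence "A * (A * x * x - 2 * B * x * y + C * y * y) \<ge> 0" by simp
  thus ?thesis using A by (simp add: zero_le_mult_iff)
qed

lemma top_eigen:
  fixes k11 k12 k22 x1 x2 :: real
  assumes F: "k11 * x1 * x1 + 2 * k12 * x1 * x2 + k22 * x2 * x2 > x1 * x1 + x2 * x2"
  shows "\<exists>\<mu> z1 z2. \<mu> > 1 \<and> k11 * z1 + k12 * z2 = \<mu> * z1 \<and> k12 * z1 + k22 * z2 = \<mu> * z2
     \<and> z1 * z1 + z2 * z2 > 0"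
proof -
  define d where "d = sqrt (((k11 - k22) / 2)^2 + k12^2)"
  define \<mu> where "\<mu> = (k11 + k22) / 2 + d"
  have dd: "d * d = ((k11 - k22) / 2)^2 + k12^2" by (simp add: d_def)
  have d1: "d \<ge> \<bar>(k11 - k22) / 2\<bar>" unfolding d_def
    by (rule real_le_rsqrt) (simp add: power2_eq_square)
  have A: "\<mu> - k11 \<ge> 0" "\<mu> - k22 \<ge> 0" using d1 by (simp_all add: \<mu>_def abs_le_iff field_simps)
  have AC: "(\<mu> - k11) * (\<mu> - k22) = k12 * k12"
    using dd unfolding \<mu>_def by (simp add: power2_eq_square algebra_simps divide_simps) 
  have "(\<mu> - k11) * x1 * x1 - 2 * k12 * x1 * x2 + (\<mu> - k22) * x2 * x2 \<ge> 0"
    using quad_bound[OF A AC] by simp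
  hence le: "k11 * x1 * x1 + 2 * k12 * x1 * x2 + k22 * x2 * x2 \<le> \<mu> * (x1 * x1 + x2 * x2)"
    by (simp add: algebra_simps)
  have pos: "x1 * x1 + x2 * x2 > 0"
  proof (rule ccontr)
    assume "\<not> ?thesis"
    hence "x1 = 0" "x2 = 0" by (smt (verit) zero_le_square mult_eq_0_iff)+
    thus False using F by simp
  qed
  have mu1: "\<mu> > 1"
  proof (rule ccontr)
    assume "\<not> \<mu> > 1"
    hence "\<mu> * (x1 * x1 + x2 * x2) \<le> x1 * x1 + x2 * x2" using pos by (simp add: mult_le_cancel_right1)
    thus False using le F by linarith
  qed
  have eig: "\<exists>z1 z2. k11 * z1 + k12 * z2 = \<mu> * z1 \<and> k12 * z1 + k22 * z2 = \<mu> * z2 \<and> z1 * z1 + z2 * z2 > 0"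
  proof (cases "k12 = 0")
    case True
    hence "(\<mu> - k11) * (\<mu> - k22) = 0" using AC by simp
    hence "\<mu> = k11 \<or> \<mu> = k22" by simp
    thus ?thesis
    proof
      assume "\<mu> = k11" thus ?thesis using True by (intro exI[of _ 1] exI[of _ 0]) simp
    next
      assume "\<mu> = k22" thus ?thesis using True by (intro exI[of _ 0] exI[of _ 1]) simp
    qed
  next
    case False
    have "k11 * k12 + k12 * (\<mu> - k11) = \<mu> * k12" by (simp add: algebra_simps)
    moreover have "k12 * k12 + k22 * (\<mu> - k11) = \<mu> * (\<mu> - k11)" using AC by (simp add: algebra_simps)
    moreover have "k12 * k12 + (\<mu> - k11) * (\<mu> - k11) > 0"
    proof -
      have "k12 * k12 > 0" using False by (metis not_real_square_gt_zero)
      thus ?thesis using zero_le_square[of "\<mu> - k11"] by linarith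
    qed
    ultimately show ?thesis by blast
  qed
  thus ?thesis using mu1 by blast
qed

theorem lemma6p3:
  fixes P Q :: "mink set" and hP hQ :: "mink \<Rightarrow> mink"
  assumes "is_plane P" and "is_plane Q" and "ultra_parallel P Q"
    and "is_half_turn P hP" and "is_half_turn Q hQ"
  shows "hyperbolic_isometry (hP \<circ> hQ)"
proof -
  obtain n1 n2 where n: "mink_form n1 n1 = 1" "mink_form n2 n2 = 1" "mink_form n1 n2 = 0"
    and P: "P = {x \<in> H4. mink_form x n1 = 0 \<and> mink_form x n2 = 0}"
    and hP: "hP = mink_refl n1 \<circ> mink_refl n2"
    using assms(4) unfolding is_half_turn_def by blast
  obtain m1 m2 where m: "mink_form m1 m1 = 1" "mink_form m2 m2 = 1" "mink_form m1 m2 = 0"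
    and Q: "Q = {x \<in> H4. mink_form x m1 = 0 \<and> mink_form x m2 = 0}"
    and hQ: "hQ = mink_refl m1 \<circ> mink_refl m2"
    using assms(5) unfolding is_half_turn_def by blast
  obtain p where p: "p \<in> P" using assms(1) unfolding is_plane_def by blast
  obtain q where q: "q \<in> Q" using assms(2) unfolding is_plane_def by blast
  have n21: "mink_form n2 n1 = 0" using n(3) by (simp add: mf_sym)
  have m21: "mink_form m2 m1 = 0" using m(3) by (simp add: mf_sym)
  define RA where "RA = (\<lambda>x. x - (2 * mink_form x n1) *\<^sub>R n1 - (2 * mink_form x n2) *\<^sub>R n2)"
  define RB where "RB = (\<lambda>x. x - (2 * mink_form x m1) *\<^sub>R m1 - (2 * mink_form x m2) *\<^sub>R m2)"
  have hPf: "hP = RA" unfolding hP RA_def using half_turn_formula[OF n] by (intro ext) simp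
  have hQf: "hQ = RB" unfolding hQ RB_def using half_turn_formula[OF m] by (intro ext) simp
  define g where "g = hP \<circ> hQ"
  have gf: "g x = RA (RB x)" for x by (simp add: g_def hPf hQf)
  have iso: "is_H4_isometry g" unfolding g_def hP hQ
    using iso_comp iso_refl n(1,2) m(1,2) by metis
  hence lin: "linear g" and gform: "\<forall>x y. mink_form (g x) (g y) = mink_form x y"
    unfolding is_H4_isometry_def by blast+
  have linA: "linear RA" using iso_comp[OF iso_refl[OF n(1)] iso_refl[OF n(2)]]
    unfolding hPf[symmetric] hP is_H4_isometry_def by blast
  have UP: "s = 0" if "mink_form s n1 = 0" "mink_form s n2 = 0" "mink_form s m1 = 0"
    "mink_form s m2 = 0" "mink_form s s \<le> 0" for s
    using UP_causal[OF P Q p q assms(3) that] .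
  have nofix: "\<forall>x\<in>H4. g x \<noteq> x"
  proof (intro ballI notI)
    fix x assume x: "x \<in> H4" and gx: "g x = x"
    have RAA: "RA (RA y) = y" for y unfolding RA_def using n n21 by (simp add: algebra_simps)
    have "RB x = RA x" using gx RAA[of "RB x"] by (simp add: gf)
    hence e: "(mink_form x m1) *\<^sub>R m1 + (mink_form x m2) *\<^sub>R m2 = (mink_form x n1) *\<^sub>R n1 + (mink_form x n2) *\<^sub>R n2"
    proof -
      have "(2::real) *\<^sub>R ((mink_form x m1) *\<^sub>R m1 + (mink_form x m2) *\<^sub>R m2) = 2 *\<^sub>R ((mink_form x n1) *\<^sub>R n1 + (mink_form x n2) *\<^sub>R n2)"
        using \<open>RB x = RA x\<close> unfolding RA_def RB_def by (simp add: algebra_simps)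
      thus ?thesis by simp
    qed
    define a where "a = (mink_form x n1) *\<^sub>R n1 + (mink_form x n2) *\<^sub>R n2"
    define w where "w = x - a"
    have w1: "mink_form w n1 = 0" "mink_form w n2 = 0" using n n21 by (simp_all add: w_def a_def)
    have w2: "mink_form w m1 = 0" "mink_form w m2 = 0" using m m21 e[symmetric]
      by (simp_all add: w_def a_def[symmetric])
    have xx: "mink_form x x = -1" using x by (simp add: H4_def)
    have "mink_form w w = mink_form x x - (mink_form x n1)^2 - (mink_form x n2)^2"
      using n n21 by (simp add: w_def a_def mf_sym[of n1 x] mf_sym[of n2 x] power2_eq_square algebra_simps)
    hence ww: "mink_form w w < 0" using xx by (smt (verit) zero_le_power2)
    have "w = 0" using UP[OF w1 w2] ww by simp
    thus False using ww by simp
  qed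
  define g11 where "g11 = mink_form n1 m1"
  define g12 where "g12 = mink_form n1 m2"
  define g21 where "g21 = mink_form n2 m1"
  define g22 where "g22 = mink_form n2 m2"
  have gs: "mink_form m1 n1 = g11" "mink_form m2 n1 = g12" "mink_form m1 n2 = g21" "mink_form m2 n2 = g22"
    by (simp_all add: g11_def g12_def g21_def g22_def mf_sym)
  define k11 where "k11 = g11 * g11 + g12 * g12"
  define k12 where "k12 = g11 * g21 + g12 * g22"
  define k22 where "k22 = g21 * g21 + g22 * g22"
  have exF: "\<exists>x1 x2. k11 * x1 * x1 + 2 * k12 * x1 * x2 + k22 * x2 * x2 > x1 * x1 + x2 * x2"
  proof (rule ccontr)
    assume "\<not> ?thesis"
    hence H: "k11 * x1 * x1 + 2 * k12 * x1 * x2 + k22 * x2 * x2 \<le> x1 * x1 + x2 * x2" for x1 x2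
      by (simp add: not_less)
    have "\<forall>v\<in>span {n1, n2, m1, m2}. mink_form v v \<ge> 0"
    proof
      fix v assume "v \<in> span {n1, n2, m1, m2}"
      then obtain x1 x2 x3 x4 where v: "v = x1 *\<^sub>R n1 + x2 *\<^sub>R n2 + x3 *\<^sub>R m1 + x4 *\<^sub>R m2"
        using span4_rep by blast
      define a1 where "a1 = x1 * g11 + x2 * g21"
      define a2 where "a2 = x1 * g12 + x2 * g22"
      have "a1 * a1 + a2 * a2 = k11 * x1 * x1 + 2 * k12 * x1 * x2 + k22 * x2 * x2"
        by (simp add: a1_def a2_def k11_def k12_def k22_def algebra_simps)
      hence aa: "a1 * a1 + a2 * a2 \<le> x1 * x1 + x2 * x2" using H[of x1 x2] by simp
      have "mink_form v v = x1 * x1 + x2 * x2 + x3 * x3 + x4 * x4 + 2 * (a1 * x3 + a2 * x4)"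
        unfolding v using n m n21 m21 gs
        by (simp add: a1_def a2_def g11_def[symmetric] g12_def[symmetric] g21_def[symmetric] g22_def[symmetric] algebra_simps)
      also have "\<dots> \<ge> (a1 + x3) * (a1 + x3) + (a2 + x4) * (a2 + x4)"
        using aa by (simp add: algebra_simps)
      finally show "mink_form v v \<ge> 0"
        by (smt (verit) zero_le_square)
    qed
    then obtain s where s: "s \<noteq> 0" "mink_form s n1 = 0" "mink_form s n2 = 0" "mink_form s m1 = 0"
      "mink_form s m2 = 0" "mink_form s s \<le> 0"
      using psd_complement[of n1 n2 m1 m2] by blast
    show False using UP[OF s(2-6)] s(1) by simp
  qed
  then obtain x1 x2 where "k11 * x1 * x1 + 2 * k12 * x1 * x2 + k22 * x2 * x2 > x1 * x1 + x2 * x2" by blast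
  then obtain \<mu> z1 z2 where mu: "\<mu> > 1" and eig: "k11 * z1 + k12 * z2 = \<mu> * z1" "k12 * z1 + k22 * z2 = \<mu> * z2"
    and zpos: "z1 * z1 + z2 * z2 > 0"
    using top_eigen by blast
  define a where "a = z1 *\<^sub>R n1 + z2 *\<^sub>R n2"
  define b1 where "b1 = z1 * g11 + z2 * g21"
  define b2 where "b2 = z1 * g12 + z2 * g22"
  define b where "b = b1 *\<^sub>R m1 + b2 *\<^sub>R m2"
  define r where "r = z1 * z1 + z2 * z2"
  have gs': "mink_form n1 m1 = g11" "mink_form n1 m2 = g12" "mink_form n2 m1 = g21" "mink_form n2 m2 = g22"
    by (simp_all add: g11_def g12_def g21_def g22_def)
  have am: "mink_form a m1 = b1" "mink_form a m2 = b2"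
    by (simp_all add: a_def b1_def b2_def gs')
  have an: "mink_form a n1 = z1" "mink_form a n2 = z2"
    using n n21 by (simp_all add: a_def)
  have bm: "mink_form b m1 = b1" "mink_form b m2 = b2"
    using m m21 by (simp_all add: b_def)
  have bn: "mink_form b n1 = \<mu> * z1" "mink_form b n2 = \<mu> * z2"
  proof -
    have "mink_form b n1 = k11 * z1 + k12 * z2"
      by (simp add: b_def gs b1_def b2_def k11_def k12_def algebra_simps)
    thus "mink_form b n1 = \<mu> * z1" using eig by simp
    have "mink_form b n2 = k12 * z1 + k22 * z2"
      by (simp add: b_def gs b1_def b2_def k12_def k22_def algebra_simps)
    thus "mink_form b n2 = \<mu> * z2" using eig by simp
  qed
  have aa: "mink_form a a = r" using an by (simp add: a_def r_def)
  have ab: "mink_form a b = \<mu> * r"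
  proof -
    have "mink_form a b = z1 * (\<mu> * z1) + z2 * (\<mu> * z2)" using bn
      by (simp add: a_def mf_sym[of n1 b] mf_sym[of n2 b])
    thus ?thesis by (simp add: r_def algebra_simps)
  qed
  have bb: "mink_form b b = \<mu> * r"
  proof -
    have "mink_form b b = b1 * b1 + b2 * b2" using bm by (simp add: b_def mf_sym[of m1 b] mf_sym[of m2 b])
    also have "\<dots> = mink_form a b" using am by (simp add: b_def)
    finally show ?thesis using ab by simp
  qed
  have RBa: "RB a = a - 2 *\<^sub>R b" unfolding RB_def using am by (simp add: b_def algebra_simps)
  have RBb: "RB b = - b"
  proof -
    have e1: "(2 * b1) *\<^sub>R m1 + (2 * b2) *\<^sub>R m2 = 2 *\<^sub>R b" by (simp add: b_def scaleR_add_right)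
    have "RB b = b - ((2 * b1) *\<^sub>R m1 + (2 * b2) *\<^sub>R m2)" unfolding RB_def bm by (simp add: algebra_simps)
    also have "\<dots> = - b" unfolding e1 by (simp add: scaleR_2)
    finally show ?thesis .
  qed
  have RAa: "RA a = - a"
  proof -
    have e1: "(2 * z1) *\<^sub>R n1 + (2 * z2) *\<^sub>R n2 = 2 *\<^sub>R a" by (simp add: a_def scaleR_add_right)
    have "RA a = a - ((2 * z1) *\<^sub>R n1 + (2 * z2) *\<^sub>R n2)" unfolding RA_def an by (simp add: algebra_simps)
    also have "\<dots> = - a" unfolding e1 by (simp add: scaleR_2)
    finally show ?thesis .
  qed
  have RAb: "RA b = b - (2 * \<mu>) *\<^sub>R a" unfolding RA_def using bn by (simp add: a_def algebra_simps)
  have ga: "g a = (4 * \<mu> - 1) *\<^sub>R a - 2 *\<^sub>R b"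
  proof -
    have "g a = RA a - 2 *\<^sub>R RA b" unfolding gf RBa using linA by (simp add: linear_diff linear_cmul)
    also have "\<dots> = (4 * \<mu> - 1) *\<^sub>R a - 2 *\<^sub>R b" unfolding RAa RAb by (simp add: algebra_simps)
    finally show ?thesis .
  qed
  have gb: "g b = (2 * \<mu>) *\<^sub>R a - b"
  proof -
    have "g b = - RA b" unfolding gf RBb using linA by (simp add: linear_neg)
    also have "\<dots> = (2 * \<mu>) *\<^sub>R a - b" unfolding RAb by (simp add: algebra_simps)
    finally show ?thesis .
  qed
  have eigv: "v \<noteq> 0 \<and> mink_form v v = 0 \<and> g v = l *\<^sub>R v"
    if l: "l * l - (4 * \<mu> - 2) * l + 1 = 0" and v: "v = (1 + l) *\<^sub>R a - 2 *\<^sub>R b" for l v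
  proof -
    have "g v = (1 + l) *\<^sub>R g a - 2 *\<^sub>R g b" unfolding v using lin by (simp add: linear_diff linear_cmul)
    also have "\<dots> = ((1 + l) * (4 * \<mu> - 1) - 4 * \<mu>) *\<^sub>R a - (2 * l) *\<^sub>R b"
      unfolding ga gb by (simp add: algebra_simps)
    also have "(1 + l) * (4 * \<mu> - 1) - 4 * \<mu> = l * (1 + l)" using l by (simp add: algebra_simps)
    finally have g1: "g v = l *\<^sub>R v" unfolding v by (simp add: algebra_simps)
    have "mink_form v v = r * (l * l - (4 * \<mu> - 2) * l + 1)"
      unfolding v using aa ab bb by (simp add: mf_sym[of b a] algebra_simps)
    hence g2: "mink_form v v = 0" using l by simp
    have "mink_form v b = \<mu> * r * (l - 1)" unfolding v using ab bb by (simp add: algebra_simps)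
    moreover have "l \<noteq> 1" using l mu by auto
    moreover have "r > 0" using zpos by (simp add: r_def)
    ultimately have "mink_form v b \<noteq> 0" using mu by simp
    hence "v \<noteq> 0" by auto
    thus ?thesis using g1 g2 by blast
  qed
  define sq where "sq = sqrt (\<mu> * \<mu> - \<mu>)"
  have sqp: "sq > 0" using mu by (simp add: sq_def)
  have sqq: "sq * sq = \<mu> * \<mu> - \<mu>" using mu by (simp add: sq_def)
  define l1 where "l1 = 2 * \<mu> - 1 + 2 * sq"
  define l2 where "l2 = 2 * \<mu> - 1 - 2 * sq"
  have l1e: "l1 * l1 - (4 * \<mu> - 2) * l1 + 1 = 0" using sqq by (simp add: l1_def algebra_simps)
  have l2e: "l2 * l2 - (4 * \<mu> - 2) * l2 + 1 = 0" using sqq by (simp add: l2_def algebra_simps)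
  have l1p: "l1 > 0" using mu sqp by (simp add: l1_def)
  have "(2 * sq) * (2 * sq) < (2 * \<mu> - 1) * (2 * \<mu> - 1)" using sqq by (simp add: algebra_simps)
  hence "2 * sq < 2 * \<mu> - 1" using mu sqp by (smt (verit) mult_strict_mono)
  hence l2p: "l2 > 0" by (simp add: l2_def)
  have l12: "l1 \<noteq> l2" using sqp by (simp add: l1_def l2_def)
  define v1 where "v1 = (1 + l1) *\<^sub>R a - 2 *\<^sub>R b"
  define v2 where "v2 = (1 + l2) *\<^sub>R a - 2 *\<^sub>R b"
  have V1: "v1 \<noteq> 0" "mink_form v1 v1 = 0" "g v1 = l1 *\<^sub>R v1" using eigv[OF l1e v1_def] by auto
  have V2: "v2 \<noteq> 0" "mink_form v2 v2 = 0" "g v2 = l2 *\<^sub>R v2" using eigv[OF l2e v2_def] by auto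
  define \<xi>1 where "\<xi>1 = (1 / fst v1) *\<^sub>R snd v1"
  define \<xi>2 where "\<xi>2 = (1 / fst v2) *\<^sub>R snd v2"
  have X1: "fixes_boundary_point g \<xi>1" "g (1, \<xi>1) = l1 *\<^sub>R (1, \<xi>1)"
    using boundary_from_null[OF lin V1 l1p] unfolding \<xi>1_def by auto
  have X2: "fixes_boundary_point g \<xi>2" "g (1, \<xi>2) = l2 *\<^sub>R (1, \<xi>2)"
    using boundary_from_null[OF lin V2 l2p] unfolding \<xi>2_def by auto
  have X12: "\<xi>1 \<noteq> \<xi>2"
  proof
    assume "\<xi>1 = \<xi>2"
    hence "l1 *\<^sub>R (1, \<xi>1) = l2 *\<^sub>R (1, \<xi>1)" using X1(2) X2(2) by simp
    hence "fst (l1 *\<^sub>R (1::real, \<xi>1)) = fst (l2 *\<^sub>R (1::real, \<xi>1))" by (rule arg_cong)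
    hence "l1 = l2" by simp
    thus False using l12 by simp
  qed
  have Fset: "{\<xi>. fixes_boundary_point g \<xi>} = {\<xi>1, \<xi>2}"
  proof
    show "{\<xi>1, \<xi>2} \<subseteq> {\<xi>. fixes_boundary_point g \<xi>}" using X1 X2 by simp
    show "{\<xi>. fixes_boundary_point g \<xi>} \<subseteq> {\<xi>1, \<xi>2}"
    proof
      fix \<eta> assume "\<eta> \<in> {\<xi>. fixes_boundary_point g \<xi>}"
      hence fe: "fixes_boundary_point g \<eta>" by simp
      then obtain c where c: "g (1, \<eta>) = c *\<^sub>R (1, \<eta>)" unfolding fixes_boundary_point_def by blast
      show "\<eta> \<in> {\<xi>1, \<xi>2}"
      proof (rule ccontr)
        assume "\<eta> \<notin> {\<xi>1, \<xi>2}"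
        hence ne: "\<eta> \<noteq> \<xi>1" "\<eta> \<noteq> \<xi>2" by auto
        have "c * l1 = 1" using fixes_pair[OF gform fe X1(1) ne(1) c X1(2)] .
        moreover have "c * l2 = 1" using fixes_pair[OF gform fe X2(1) ne(2) c X2(2)] .
        ultimately have "l1 = l2" by (metis mult_cancel_left zero_neq_one mult_zero_left)
        thus False using l12 by simp
      qed
    qed
  qed
  have "card {\<xi>. fixes_boundary_point g \<xi>} = 2" unfolding Fset using X12 by simp
  thus ?thesis unfolding hyperbolic_isometry_def g_def[symmetric] using iso nofix by blast
qed

end
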